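(* For any NSP expressions $d$ and $e_i$ ($i\in\mathbb{N}$), $\langle\!\langle \mathtt{case}\ d\ \mathtt{of}\ (i\Rightarrow e_i)\rangle\!\rangle = d[i\mapsto e_i]$.
   Context: NSP terms are the possibly infinite syntax trees generated coinductively by: procedures $p::=\lambda x_0\cdots x_{r-1}.e$; expressions $d,e::=\bot\mid n\ (n\in\mathbb{N})\mid \mathtt{case}\ a\ \mathtt{of}\ (i\Rightarrow e_i\mid i\in\mathbb{N})$; applications $a::=x\,q_0\cdots q_{r-1}$ (modulo $\alpha$-equivalence). Meta-terms additionally allow ground forms $P\vec Q$ and $\mathtt{case}\ G\ \mathtt{of}(\ldots)$ with $G$ an arbitrary ground meta-term (including an expression); they reduce by the $\beta$-rule $(\lambda\vec x.E)\vec Q\rightsquigarrow E[\vec x\mapsto\vec Q]$, $\mathtt{case}\ \bot\ \mathtt{of}(\ldots)\rightsquigarrow\bot$, $\mathtt{case}\ n\ \mathtt{of}\ (i\Rightarrow E_i)\rightsquigarrow E_n$, $\mathtt{case}\ (\mathtt{case}\ G\ \mathtt{of}\ (i\Rightarrow E_i))\ \mathtt{of}\ (j\Rightarrow F_j)\rightsquigarrow \mathtt{case}\ G\ \mathtt{of}\ (i\Rightarrow\mathtt{case}\ E_i\ \mathtt{of}\ (j\Rightarrow F_j))$, applied in head position and recursively under $\lambda$, in arguments of $x\vec Q$ and in branches of $\mathtt{case}\ x\vec Q\ \mathtt{of}(\ldots)$; $\langle\!\langle T\rangle\!\rangle$ is the supremum (syntactic order, $\bot$ least) of the finite terms lying below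 some reduct of $T$. The rightward numeral leaves of a term are defined inductively: $n$ is one in itself; those of $e$ are ones of $\lambda\vec x.e$; those of each $e_i$ are ones of $\mathtt{case}\ a\ \mathtt{of}\ (i\Rightarrow e_i)$. For a term $t$ and expressions $e_i$, $t[i\mapsto e_i]$ denotes the result of replacing each rightward numeral leaf occurrence $i$ in $t$ by $e_i$. *)

theory Defs
  imports Main
begin

text \<open>Variables are de Bruijn indices (so terms are identified modulo alpha).
  A procedure \<open>MLam r E\<close> binds r variables x_0 .. x_{r-1}; inside E the
  variable x_j is index j, and a variable referring to an enclosing binder
  is shifted by r.  Ground meta-terms: bottom, numerals, case, applications
  \<open>x Q_0 .. Q_{r-1}\<close> with variable head, and meta-applications \<open>P Q\<close>.\<close>

codatatype mproc = MLam nat mexp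
  and mexp = MBot | MNum nat | MCase mexp "nat \<Rightarrow> mexp"
           | MVApp nat "mproc list" | MApp mproc "mproc list"

coinductive nsp_p :: "mproc \<Rightarrow> bool" and nsp_e :: "mexp \<Rightarrow> bool" where
  "nsp_e E \<Longrightarrow> nsp_p (MLam r E)"
| "nsp_e MBot"
| "nsp_e (MNum n)"
| "(\<forall>q\<in>set qs. nsp_p q) \<Longrightarrow> (\<forall>i. nsp_e (es i)) \<Longrightarrow> nsp_e (MCase (MVApp x qs) es)"

inductive fin_p :: "mproc \<Rightarrow> bool" and fin_e :: "mexp \<Rightarrow> bool" where
  "fin_e E \<Longrightarrow> fin_p (MLam r E)"
| "fin_e MBot"
| "fin_e (MNum n)"
| "(\<forall>q\<in>set qs. fin_p q) \<Longrightarrow> (\<forall>i. fin_e (es i)) \<Longrightarrow> finite {i. es i \<noteq> MBot}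
    \<Longrightarrow> fin_e (MCase (MVApp x qs) es)"

coinductive le_p :: "mproc \<Rightarrow> mproc \<Rightarrow> bool" and le_e :: "mexp \<Rightarrow> mexp \<Rightarrow> bool" where
  "le_e E E' \<Longrightarrow> le_p (MLam r E) (MLam r E')"
| "le_e MBot X"
| "le_e (MNum n) (MNum n)"
| "le_e G G' \<Longrightarrow> (\<forall>i. le_e (es i) (es' i)) \<Longrightarrow> le_e (MCase G es) (MCase G' es')"
| "list_all2 le_p qs qs' \<Longrightarrow> le_e (MVApp x qs) (MVApp x qs')"
| "le_p P P' \<Longrightarrow> list_all2 le_p qs qs' \<Longrightarrow> le_e (MApp P qs) (MApp P' qs')"

primcorec lift_p :: "nat \<Rightarrow> nat \<Rightarrow> mproc \<Rightarrow> mproc"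
  and lift_e :: "nat \<Rightarrow> nat \<Rightarrow> mexp \<Rightarrow> mexp" where
  "lift_p c s P = (case P of MLam r E \<Rightarrow> MLam r (lift_e (c + r) s E))"
| "lift_e c s E = (case E of
      MBot \<Rightarrow> MBot
    | MNum n \<Rightarrow> MNum n
    | MCase G es \<Rightarrow> MCase (lift_e c s G) (\<lambda>i. lift_e c s (es i))
    | MVApp x qs \<Rightarrow> MVApp (if x < c then x else x + s) (map (lift_p c s) qs)
    | MApp P qs \<Rightarrow> MApp (lift_p c s P) (map (lift_p c s) qs))"

text \<open>\<open>sub_e k Qs E\<close>: the body E of a binder \<open>\<lambda>x_0..x_{r-1}\<close> (r = length Qs),
  at local depth k (number of variables bound inside E so far), with
  \<open>x_j \<mapsto> Qs!j\<close>.\<close>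

primcorec sub_p :: "nat \<Rightarrow> mproc list \<Rightarrow> mproc \<Rightarrow> mproc"
  and sub_e :: "nat \<Rightarrow> mproc list \<Rightarrow> mexp \<Rightarrow> mexp" where
  "sub_p k Qs P = (case P of MLam r E \<Rightarrow> MLam r (sub_e (k + r) Qs E))"
| "sub_e k Qs E = (case E of
      MBot \<Rightarrow> MBot
    | MNum n \<Rightarrow> MNum n
    | MCase G es \<Rightarrow> MCase (sub_e k Qs G) (\<lambda>i. sub_e k Qs (es i))
    | MVApp x qs \<Rightarrow>
        (if x < k then MVApp x (map (sub_p k Qs) qs)
         else if x < k + length Qs then MApp (lift_p 0 k (Qs ! (x - k))) (map (sub_p k Qs) qs)
         else MVApp (x - length Qs) (map (sub_p k Qs) qs))
    | MApp P qs \<Rightarrow> MApp (sub_p k Qs P) (map (sub_p k Qs) qs))"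

inductive hstep :: "mexp \<Rightarrow> mexp \<Rightarrow> bool" where
  beta: "length Qs = r \<Longrightarrow> hstep (MApp (MLam r E) Qs) (sub_e 0 Qs E)"
| case_bot: "hstep (MCase MBot es) MBot"
| case_num: "hstep (MCase (MNum n) es) (es n)"
| case_case: "hstep (MCase (MCase G es) fs) (MCase G (\<lambda>i. MCase (es i) fs))"
| case_cong: "hstep G G' \<Longrightarrow> hstep (MCase G es) (MCase G' es)"

inductive step_p :: "mproc \<Rightarrow> mproc \<Rightarrow> bool" and step_e :: "mexp \<Rightarrow> mexp \<Rightarrow> bool" where
  "step_e E E' \<Longrightarrow> step_p (MLam r E) (MLam r E')"
| "hstep G G' \<Longrightarrow> step_e G G'"
| "j < length qs \<Longrightarrow> step_p (qs ! j) q' \<Longrightarrow> step_e (MVApp x qs) (MVApp x (qs[j := q']))"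
| "step_e (MVApp x qs) a' \<Longrightarrow> step_e (MCase (MVApp x qs) es) (MCase a' es)"
| "step_e (es i) E' \<Longrightarrow> step_e (MCase (MVApp x qs) es) (MCase (MVApp x qs) (es(i := E')))"

subsection \<open>Evaluation \<open>\<langle>\<langle>T\<rangle>\<rangle>\<close> of a ground meta-term\<close>

definition approxs :: "mexp \<Rightarrow> mexp set" where
  "approxs T = {t. fin_e t \<and> (\<exists>T'. step_e\<^sup>*\<^sup>* T T' \<and> le_e t T')}"

definition nsp_eval :: "mexp \<Rightarrow> mexp" where
  "nsp_eval T = (THE U. nsp_e U \<and> (\<forall>t\<in>approxs T. le_e t U)
      \<and> (\<forall>U'. nsp_e U' \<longrightarrow> (\<forall>t\<in>approxs T. le_e t U') \<longrightarrow> le_e U U'))"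

subsection \<open>Replacement of rightward numeral leaves in an expression\<close>

primcorec rsub :: "mexp \<Rightarrow> (nat \<Rightarrow> mexp) \<Rightarrow> mexp" where
  "rsub d es = (case d of
      MBot \<Rightarrow> MBot
    | MNum n \<Rightarrow> (case es n of
          MBot \<Rightarrow> MBot
        | MNum m \<Rightarrow> MNum m
        | MCase G fs \<Rightarrow> MCase G fs
        | MVApp x qs \<Rightarrow> MVApp x qs
        | MApp P qs \<Rightarrow> MApp P qs)
    | MCase G fs \<Rightarrow> MCase G (\<lambda>i. rsub (fs i) es)
    | MVApp x qs \<Rightarrow> MVApp x qs
    | MApp P qs \<Rightarrow> MApp P qs)"

end

theory Submission
  imports Defs
begin

lemma hstep_MVApp: "hstep (MVApp x qs) G' \<Longrightarrow> False"
  by (cases rule: hstep.cases) auto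

lemma hstep_nsp: "hstep G G' \<Longrightarrow> nsp_e G \<Longrightarrow> False"
  by (induction rule: hstep.induct) (auto elim: nsp_e.cases hstep.cases)

lemma step_nsp:
  "(step_p P P' \<longrightarrow> nsp_p P \<longrightarrow> False) \<and>
   (step_e E E' \<longrightarrow> (nsp_e E \<longrightarrow> False) \<and> (\<forall>x qs. E = MVApp x qs \<longrightarrow> (\<forall>q\<in>set qs. nsp_p q) \<longrightarrow> False))"
proof (induction rule: step_p_step_e.induct)
  case (1 E E' r) then show ?case by (auto elim: nsp_p.cases)
next
  case (2 G G') then show ?case using hstep_nsp hstep_MVApp by blast
next
  case (3 j qs q' x) then show ?case by (auto elim: nsp_e.cases)
next
  case (4 x qs a' es) then show ?case by (auto elim: nsp_e.cases)
next
  case (5 es i E' x qs) then show ?case by (auto elim: nsp_e.cases)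
qed

lemma step_e_nsp: "step_e E E' \<Longrightarrow> nsp_e E \<Longrightarrow> False"
  using step_nsp by blast

lemma rsub_MBot[simp]: "rsub MBot es = MBot"
  by (subst rsub.code) simp
lemma rsub_MNum[simp]: "rsub (MNum n) es = es n"
  by (subst rsub.code) (simp split: mexp.split)
lemma rsub_MCase[simp]: "rsub (MCase G fs) es = MCase G (\<lambda>i. rsub (fs i) es)"
  by (subst rsub.code) simp

lemma nsp_rsub:
  assumes "nsp_e d" "\<forall>i. nsp_e (es i)"
  shows "nsp_e (rsub d es)"
proof -
  have "(\<forall>x. (\<lambda>p. False) x \<longrightarrow> nsp_p x) \<and> (\<forall>x. (\<lambda>e. \<exists>d. nsp_e d \<and> e = rsub d es) x \<longrightarrow> nsp_e x)"
  proof (rule nsp_p_nsp_e.coinduct)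
    fix x assume "\<exists>d. nsp_e d \<and> x = rsub d es"
    then obtain d where d: "nsp_e d" "x = rsub d es" by blast
    from d(1) show "x = MBot \<or> (\<exists>n. x = MNum n) \<or>
          (\<exists>qs es' y. x = MCase (MVApp y qs) es' \<and> (\<forall>q\<in>set qs. False \<or> nsp_p q) \<and>
             (\<forall>i. (\<exists>d. nsp_e d \<and> es' i = rsub d es) \<or> nsp_e (es' i)))"
    proof (cases rule: nsp_e.cases)
      case 1 then show ?thesis using d by simp
    next
      case (2 n)
      then have xe: "x = es n" using d by simp
      have "nsp_e (es n)" using assms by blast
      then show ?thesis unfolding xe by (rule nsp_e.cases) auto
    next
      case (3 qs fs y)
      then show ?thesis using d by auto
    qed
  qed auto
  then show ?thesis using assms by blast
qed

lemma la2_both: "list_all2 P xs ys \<Longrightarrow> list_all2 Q ys xs \<Longrightarrow> list_all2 (\<lambda>a b. P a b \<and> Q b a) xs ys"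
  by (auto simp: list_all2_conv_all_nth)

lemma le_antisym_both:
  "(\<lambda>p q. le_p p q \<and> le_p q p) p q \<longrightarrow> p = q"
  "(\<lambda>a b. le_e a b \<and> le_e b a) a b \<longrightarrow> a = b"
proof -
  have "((\<lambda>p q. le_p p q \<and> le_p q p) p q \<longrightarrow> p = q) \<and> ((\<lambda>a b. le_e a b \<and> le_e b a) a b \<longrightarrow> a = b)"
  proof (rule mproc_mexp.coinduct)
    fix p q assume "le_p p q \<and> le_p q p"
    then show "un_MLam1 p = un_MLam1 q \<and> (le_e (un_MLam2 p) (un_MLam2 q) \<and> le_e (un_MLam2 q) (un_MLam2 p))"
      by (auto elim!: le_p.cases)
  next
    fix a b assume ab: "le_e a b \<and> le_e b a"
    then show "(a = MBot) = (b = MBot) \<and>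
      is_MNum a = is_MNum b \<and>
      (is_MNum a \<longrightarrow> is_MNum b \<longrightarrow> un_MNum a = un_MNum b) \<and>
      is_MCase a = is_MCase b \<and>
      (is_MCase a \<longrightarrow> is_MCase b \<longrightarrow>
       (le_e (un_MCase1 a) (un_MCase1 b) \<and> le_e (un_MCase1 b) (un_MCase1 a)) \<and>
       rel_fun (=) (\<lambda>a b. le_e a b \<and> le_e b a) (un_MCase2 a) (un_MCase2 b)) \<and>
      is_MVApp a = is_MVApp b \<and>
      (is_MVApp a \<longrightarrow> is_MVApp b \<longrightarrow>
       un_MVApp1 a = un_MVApp1 b \<and>
       list_all2 (\<lambda>p q. le_p p q \<and> le_p q p) (un_MVApp2 a) (un_MVApp2 b)) \<and>
      (is_MApp a \<longrightarrow> is_MApp b \<longrightarrow>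
       (le_p (un_MApp1 a) (un_MApp1 b) \<and> le_p (un_MApp1 b) (un_MApp1 a)) \<and>
       list_all2 (\<lambda>p q. le_p p q \<and> le_p q p) (un_MApp2 a) (un_MApp2 b))"
    proof -
      from ab have l1: "le_e a b" and l2: "le_e b a" by auto
      from l1 show ?thesis
      proof (cases rule: le_e.cases)
        case 1 then have "b = MBot" using l2 by (auto elim: le_e.cases)
        then show ?thesis using 1 by simp
      next
        case (2 n) then show ?thesis by simp
      next
        case (3 G G' es es')
        then have "le_e (MCase G' es') (MCase G es)" using l2 by simp
        then have "le_e G' G \<and> (\<forall>i. le_e (es' i) (es i))" by (cases rule: le_e.cases) auto
        then show ?thesis using 3 by (simp add: rel_fun_def)
      next
        case (4 qs qs' x)
        then have "le_e (MVApp x qs') (MVApp x qs)" using l2 by simp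
        then have "list_all2 le_p qs' qs" by (cases rule: le_e.cases) auto
        then show ?thesis using 4 by (simp add: la2_both)
      next
        case (5 P P' qs qs')
        then have "le_e (MApp P' qs') (MApp P qs)" using l2 by simp
        then have "le_p P' P \<and> list_all2 le_p qs' qs" by (cases rule: le_e.cases) auto
        then show ?thesis using 5 by (simp add: la2_both)
      qed
    qed
  qed
  then show "(\<lambda>p q. le_p p q \<and> le_p q p) p q \<longrightarrow> p = q"
    "(\<lambda>a b. le_e a b \<and> le_e b a) a b \<longrightarrow> a = b" by blast+
qed

lemma le_e_antisym: "le_e a b \<Longrightarrow> le_e b a \<Longrightarrow> a = b"
  using le_antisym_both(2) by blast

inductive Inv :: "(nat \<Rightarrow> mexp) \<Rightarrow> mexp \<Rightarrow> mexp \<Rightarrow> bool" for es where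
  I1: "nsp_e V \<Longrightarrow> Inv es V V"
| I2: "nsp_e e \<Longrightarrow> Inv es (MCase e es) (rsub e es)"
| I3: "\<forall>q\<in>set qs. nsp_p q \<Longrightarrow> \<forall>i. Inv es (Fs i) (Gs i) \<Longrightarrow>
       Inv es (MCase (MVApp x qs) Fs) (MCase (MVApp x qs) Gs)"

lemma step_MVApp_nsp: "step_e (MVApp x qs) a \<Longrightarrow> \<forall>q\<in>set qs. nsp_p q \<Longrightarrow> False"
  using step_nsp by blast

lemma step_case_inv:
  assumes "step_e (MCase (MVApp x qs) Fs) T'" "\<forall>q\<in>set qs. nsp_p q"
  shows "\<exists>i E'. step_e (Fs i) E' \<and> T' = MCase (MVApp x qs) (Fs(i := E'))"
  using assms(1)
  apply (cases rule: step_e.cases)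
  using hstep_MVApp apply (auto elim: hstep.cases)
  using assms(2) step_MVApp_nsp by blast

lemma Inv_step:
  assumes "Inv es T V" "step_e T T'" "\<forall>i. nsp_e (es i)"
  shows "Inv es T' V"
  using assms(1,2)
proof (induction arbitrary: T' rule: Inv.induct)
  case (I1 V)
  then show ?case using step_e_nsp by blast
next
  case (I2 e)
  from I2(2) show ?case
  proof (cases rule: step_e.cases)
    case 1
    then show ?thesis
    proof (cases rule: hstep.cases)
      case case_bot then show ?thesis by (simp add: Inv.I1 nsp_p_nsp_e.intros)
    next
      case (case_num n) then show ?thesis using assms(3) by (simp add: Inv.I1)
    next
      case (case_case G fs)
      from I2(1) have "\<exists>x qs. G = MVApp x qs \<and> (\<forall>q\<in>set qs. nsp_p q) \<and> (\<forall>i. nsp_e (fs i))"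
        using case_case by (cases rule: nsp_e.cases) auto
      then obtain x qs where G: "G = MVApp x qs" "\<forall>q\<in>set qs. nsp_p q" "\<forall>i. nsp_e (fs i)" by blast
      show ?thesis using case_case G by (auto intro!: Inv.I3 Inv.I2)
    next
      case (case_cong G') then show ?thesis using I2(1) hstep_nsp by blast
    qed
  qed (use I2(1) in \<open>auto elim: nsp_e.cases\<close>)
next
  case (I3 qs Fs Gs x)
  from step_case_inv[OF I3(3) I3(1)] obtain i E' where
    3: "step_e (Fs i) E'" "T' = MCase (MVApp x qs) (Fs(i := E'))" by blast
  then have "Inv es E' (Gs i)" using I3(2) by auto
  then have "\<forall>j. Inv es ((Fs(i := E')) j) (Gs j)" using I3(2) by auto
  then show ?case using 3 I3(1) by (auto intro: Inv.I3)
qed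

lemma Inv_steps:
  assumes "step_e\<^sup>*\<^sup>* T T'" "Inv es T V" "\<forall>i. nsp_e (es i)"
  shows "Inv es T' V"
  using assms by (induction rule: rtranclp_induct) (auto intro: Inv_step)

lemma le_e_MCase_inv:
  "le_e t (MCase e fs) \<Longrightarrow> t = MBot \<or> (\<exists>G ts. t = MCase G ts \<and> le_e G e \<and> (\<forall>i. le_e (ts i) (fs i)))"
  by (cases rule: le_e.cases) auto

lemma Inv_bound:
  assumes "Inv es T V"
  shows "fin_e t \<Longrightarrow> le_e t T \<Longrightarrow> le_e t V"
  using assms
proof (induction arbitrary: t rule: Inv.induct)
  case (I1 V) then show ?case by simp
next
  case (I2 e)
  from le_e_MCase_inv[OF I2(3)] show ?case
  proof
    assume "t = MBot" then show ?thesis by (simp add: le_p_le_e.intros)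
  next
    assume "\<exists>G ts. t = MCase G ts \<and> le_e G e \<and> (\<forall>i. le_e (ts i) (es i))"
    then obtain G ts where 3: "t = MCase G ts" "le_e G e" by blast
    from I2(2) 3 obtain y qs where "G = MVApp y qs" by (auto elim: fin_e.cases)
    with 3 have "le_e (MVApp y qs) e" by simp
    then have "\<exists>qs'. e = MVApp y qs'" by (auto elim: le_e.cases)
    then show ?thesis using I2(1) by (auto elim: nsp_e.cases)
  qed
next
  case (I3 qs Fs Gs x)
  from le_e_MCase_inv[OF I3(4)] show ?case
  proof
    assume "t = MBot" then show ?thesis by (simp add: le_p_le_e.intros)
  next
    assume "\<exists>G ts. t = MCase G ts \<and> le_e G (MVApp x qs) \<and> (\<forall>i. le_e (ts i) (Fs i))"
    then obtain G ts where 3: "t = MCase G ts" "le_e G (MVApp x qs)" "\<forall>i. le_e (ts i) (Fs i)" by blast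
    from I3(3) 3 have "\<forall>i. fin_e (ts i)" by (auto elim: fin_e.cases)
    then have "\<forall>i. le_e (ts i) (Gs i)" using I3(2) 3 by auto
    then show ?thesis using 3 by (auto intro: le_p_le_e.intros)
  qed
qed

lemma branch_steps:
  assumes "step_e\<^sup>*\<^sup>* (Fs i) E'"
  shows "step_e\<^sup>*\<^sup>* (MCase (MVApp x qs) Fs) (MCase (MVApp x qs) (Fs(i := E')))"
  using assms
proof (induction rule: rtranclp_induct)
  case base then show ?case by simp
next
  case (step y z)
  have "step_e (MCase (MVApp x qs) (Fs(i := y))) (MCase (MVApp x qs) ((Fs(i := y))(i := z)))"
    by (rule step_p_step_e.intros(5)) (simp add: step.hyps)
  then have "step_e (MCase (MVApp x qs) (Fs(i := y))) (MCase (MVApp x qs) (Fs(i := z)))" by simp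
  then show ?case using step.IH by (rule rtranclp.rtrancl_into_rtrancl[rotated])
qed

lemma branches_steps:
  assumes "finite S"
  shows "(\<forall>i\<in>S. step_e\<^sup>*\<^sup>* (Fs i) (T i)) \<Longrightarrow>
    step_e\<^sup>*\<^sup>* (MCase (MVApp x qs) Fs) (MCase (MVApp x qs) (\<lambda>i. if i \<in> S then T i else Fs i))"
  using assms
proof (induction S rule: finite_induct)
  case empty then show ?case by simp
next
  case (insert a S)
  let ?H = "\<lambda>i. if i \<in> S then T i else Fs i"
  have 1: "step_e\<^sup>*\<^sup>* (MCase (MVApp x qs) Fs) (MCase (MVApp x qs) ?H)" using insert by simp
  have "step_e\<^sup>*\<^sup>* (?H a) (T a)" using insert by simp
  then have 2: "step_e\<^sup>*\<^sup>* (MCase (MVApp x qs) ?H) (MCase (MVApp x qs) (?H(a := T a)))"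
    by (rule branch_steps)
  have "?H(a := T a) = (\<lambda>i. if i \<in> insert a S then T i else Fs i)" by (auto simp: fun_eq_iff)
  then show ?case using 1 2 by simp
qed

lemma le_MNum_inv: "le_e (MNum n) X \<Longrightarrow> X = MNum n"
  by (cases rule: le_e.cases) auto

lemma reach_aux:
  assumes es: "\<forall>i. nsp_e (es i)"
  shows "(fin_p p \<longrightarrow> True) \<and> (fin_e t \<longrightarrow> (\<forall>d. nsp_e d \<longrightarrow> le_e t (rsub d es) \<longrightarrow>
           (\<exists>T'. step_e\<^sup>*\<^sup>* (MCase d es) T' \<and> le_e t T')))"
proof (induction rule: fin_p_fin_e.induct)
  case (1 E r) then show ?case by simp
next
  case 2 then show ?case by (auto intro: le_p_le_e.intros)
next
  case (3 n)
  show ?case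
  proof (intro allI impI)
    fix d assume d: "nsp_e d" and le: "le_e (MNum n) (rsub d es)"
    from d show "\<exists>T'. step_e\<^sup>*\<^sup>* (MCase d es) T' \<and> le_e (MNum n) T'"
    proof (cases rule: nsp_e.cases)
      case 1 then show ?thesis using le le_MNum_inv by fastforce
    next
      case (2 m)
      have "step_e (MCase d es) (es m)" using 2 by (auto intro: step_p_step_e.intros hstep.intros)
      then show ?thesis using le 2 by auto
    next
      case 3 then show ?thesis using le le_MNum_inv by fastforce
    qed
  qed
next
  case (4 qs' ts y)
  show ?case
  proof (intro allI impI)
    fix d assume d: "nsp_e d" and le: "le_e (MCase (MVApp y qs') ts) (rsub d es)"
    from d show "\<exists>T'. step_e\<^sup>*\<^sup>* (MCase d es) T' \<and> le_e (MCase (MVApp y qs') ts) T'"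
    proof (cases rule: nsp_e.cases)
      case 1 then show ?thesis using le by (auto elim: le_e.cases)
    next
      case (2 m)
      have "step_e (MCase d es) (es m)" using 2 by (auto intro: step_p_step_e.intros hstep.intros)
      then show ?thesis using le 2 by auto
    next
      case (3 qs fs x)
      from le 3 have lh: "le_e (MVApp y qs') (MVApp x qs)" and lb: "\<forall>i. le_e (ts i) (rsub (fs i) es)"
        by (auto elim: le_e.cases)
      have "\<forall>i. \<exists>T. step_e\<^sup>*\<^sup>* (MCase (fs i) es) T \<and> le_e (ts i) T"
        using 4(2) 3 lb by blast
      then obtain Tf where Tf: "\<forall>i. step_e\<^sup>*\<^sup>* (MCase (fs i) es) (Tf i) \<and> le_e (ts i) (Tf i)"
        by metis
      let ?S = "{i. ts i \<noteq> MBot}"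
      have s1: "step_e (MCase d es) (MCase (MVApp x qs) (\<lambda>i. MCase (fs i) es))"
        using 3 by (auto intro: step_p_step_e.intros hstep.intros)
      have s2: "step_e\<^sup>*\<^sup>* (MCase (MVApp x qs) (\<lambda>i. MCase (fs i) es))
         (MCase (MVApp x qs) (\<lambda>i. if i \<in> ?S then Tf i else MCase (fs i) es))"
        using branches_steps[OF 4(3), of "\<lambda>i. MCase (fs i) es" Tf x qs] Tf by simp
      have "le_e (MCase (MVApp y qs') ts) (MCase (MVApp x qs) (\<lambda>i. if i \<in> ?S then Tf i else MCase (fs i) es))"
        using lh Tf by (auto intro!: le_p_le_e.intros(4) intro: le_p_le_e.intros(2))
      then show ?thesis using s1 s2 by (meson converse_rtranclp_into_rtranclp)
    qed
  qed
qed

definition minp :: "mproc \<Rightarrow> mproc" where "minp q = MLam (un_MLam1 q) MBot"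

lemma minp_fin: "fin_p (minp q)"
  by (simp add: minp_def fin_p_fin_e.intros)

lemma minp_le: "le_p (minp q) q"
  by (cases q) (simp add: minp_def le_p_le_e.intros)

lemma le_case_inv:
  "le_e (MCase (MVApp x ps) ts) b \<Longrightarrow>
   \<exists>qs gs. b = MCase (MVApp x qs) gs \<and> list_all2 le_p ps qs \<and> (\<forall>i. le_e (ts i) (gs i))"
  by (erule le_e.cases) (auto elim: le_e.cases)

lemma le_case_intro:
  "list_all2 le_p ps qs \<Longrightarrow> (\<forall>i. le_e (ts i) (gs i)) \<Longrightarrow> le_e (MCase (MVApp x ps) ts) (MCase (MVApp x qs) gs)"
  by (auto intro: le_p_le_e.intros)

lemma fin_case_intro:
  "\<forall>q\<in>set ps. fin_p q \<Longrightarrow> \<forall>i. fin_e (ts i) \<Longrightarrow> finite {i. ts i \<noteq> MBot} \<Longrightarrow> fin_e (MCase (MVApp x ps) ts)"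
  by (auto intro: fin_p_fin_e.intros)

lemma approx_le:
  assumes "nsp_e V" "nsp_e U" "\<forall>t. fin_e t \<and> le_e t V \<longrightarrow> le_e t U"
  shows "le_e V U"
proof -
  define X1 where "X1 p q \<longleftrightarrow> nsp_p p \<and> nsp_p q \<and> (\<forall>t. fin_p t \<and> le_p t p \<longrightarrow> le_p t q)" for p q
  define X2 where "X2 a b \<longleftrightarrow> (nsp_e a \<and> nsp_e b \<and> (\<forall>t. fin_e t \<and> le_e t a \<longrightarrow> le_e t b)) \<or>
     (\<exists>x qs qs'. a = MVApp x qs \<and> b = MVApp x qs' \<and> list_all2 X1 qs qs')" for a b
  have "(\<forall>p q. X1 p q \<longrightarrow> le_p p q) \<and> (\<forall>a b. X2 a b \<longrightarrow> le_e a b)"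
  proof (rule le_p_le_e.coinduct)
    fix p q assume X: "X1 p q"
    obtain r E where p: "p = MLam r E" by (cases p)
    have "le_p (MLam r MBot) p" using p by (simp add: le_p_le_e.intros)
    then have "le_p (MLam r MBot) q" using X by (simp add: X1_def fin_p_fin_e.intros)
    then obtain E' where q: "q = MLam r E'" by (auto elim: le_p.cases)
    have "X2 E E'" unfolding X2_def
    proof (intro disjI1 conjI allI impI)
      show "nsp_e E" using X p by (auto simp: X1_def elim: nsp_p.cases)
      show "nsp_e E'" using X q by (auto simp: X1_def elim: nsp_p.cases)
      fix t assume t: "fin_e t \<and> le_e t E"
      then have "le_p (MLam r t) p" using p by (simp add: le_p_le_e.intros)
      then have "le_p (MLam r t) q" using X t by (simp add: X1_def fin_p_fin_e.intros)
      then show "le_e t E'" using q by (auto elim: le_p.cases)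
    qed
    then show "\<exists>E E' r. p = MLam r E \<and> q = MLam r E' \<and> (X2 E E' \<or> le_e E E')" using p q by blast
  next
    fix a b assume X: "X2 a b"
    show "(\<exists>X. a = MBot \<and> b = X) \<or>
    (\<exists>n. a = MNum n \<and> b = MNum n) \<or>
    (\<exists>G G' es es'. a = MCase G es \<and> b = MCase G' es' \<and>
        (X2 G G' \<or> le_e G G') \<and> (\<forall>i. X2 (es i) (es' i) \<or> le_e (es i) (es' i))) \<or>
    (\<exists>qs qs' x. a = MVApp x qs \<and> b = MVApp x qs' \<and>
        list_all2 (\<lambda>u v. X1 u v \<or> le_p u v) qs qs') \<or>
    (\<exists>P P' qs qs'. a = MApp P qs \<and> b = MApp P' qs' \<and> (X1 P P' \<or> le_p P P') \<and>
        list_all2 (\<lambda>u v. X1 u v \<or> le_p u v) qs qs')"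
    proof (cases "\<exists>x qs qs'. a = MVApp x qs \<and> b = MVApp x qs' \<and> list_all2 X1 qs qs'")
      case True
      then show ?thesis by (auto elim: list_all2_mono)
    next
      case False
      then have na: "nsp_e a" and nb: "nsp_e b" and ap: "\<forall>t. fin_e t \<and> le_e t a \<longrightarrow> le_e t b"
        using X by (auto simp: X2_def)
      from na show ?thesis
      proof (cases rule: nsp_e.cases)
        case 1 then show ?thesis by simp
      next
        case (2 n)
        then have "le_e (MNum n) b" using ap by (simp add: le_p_le_e.intros fin_p_fin_e.intros)
        then show ?thesis using 2 le_MNum_inv by blast
      next
        case (3 qs gs x)
        let ?m = "map minp qs"
        have fm: "\<forall>q\<in>set ?m. fin_p q" by (auto simp: minp_fin)
        have lm: "list_all2 le_p ?m qs" by (simp add: list_all2_conv_all_nth minp_le)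
        have "le_e (MCase (MVApp x ?m) (\<lambda>_. MBot)) b"
          using ap 3 fm lm by (simp add: le_case_intro fin_case_intro le_p_le_e.intros fin_p_fin_e.intros)
        then obtain qs'' gs' where b: "b = MCase (MVApp x qs'') gs'" and l2: "list_all2 le_p ?m qs''"
          using le_case_inv by blast
        have len: "length qs'' = length qs" using list_all2_lengthD[OF l2] by simp
        from nb b have nq: "\<forall>q\<in>set qs''. nsp_p q" and ng: "\<forall>i. nsp_e (gs' i)"
          by (auto elim: nsp_e.cases)
        have "list_all2 X1 qs qs''"
        proof (unfold list_all2_conv_all_nth, intro conjI allI impI)
          show "length qs = length qs''" using len by simp
          fix j assume j: "j < length qs"
          show "X1 (qs ! j) (qs'' ! j)" unfolding X1_def
          proof (intro conjI allI impI)
            show "nsp_p (qs ! j)" using 3 j by auto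
            show "nsp_p (qs'' ! j)" using nq j len by auto
            fix t' assume t': "fin_p t' \<and> le_p t' (qs ! j)"
            let ?m' = "?m[j := t']"
            have "\<forall>q\<in>set ?m'. fin_p q" using fm t' set_update_subset_insert[of "map minp qs" j t'] by (auto simp: minp_fin)
            moreover have "list_all2 le_p ?m' qs" using lm t' j by (auto simp: list_all2_conv_all_nth nth_list_update)
            ultimately have "le_e (MCase (MVApp x ?m') (\<lambda>_. MBot)) b"
              using ap 3 by (simp add: le_case_intro fin_case_intro le_p_le_e.intros fin_p_fin_e.intros)
            then obtain q3 g3 where "b = MCase (MVApp x q3) g3" "list_all2 le_p ?m' q3"
              using le_case_inv by blast
            then have "list_all2 le_p ?m' qs''" using b by simp
            then show "le_p t' (qs'' ! j)" using j by (auto simp: list_all2_conv_all_nth)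
          qed
        qed
        then have hd: "X2 (MVApp x qs) (MVApp x qs'')" by (auto simp: X2_def)
        have br: "\<forall>i. X2 (gs i) (gs' i)"
        proof
          fix i
          show "X2 (gs i) (gs' i)" unfolding X2_def
          proof (intro disjI1 conjI allI impI)
            show "nsp_e (gs i)" using 3 by auto
            show "nsp_e (gs' i)" using ng by auto
            fix t' assume t': "fin_e t' \<and> le_e t' (gs i)"
            let ?ts = "(\<lambda>_. MBot)(i := t')"
            have "finite {k. ?ts k \<noteq> MBot}" by (rule finite_subset[of _ "{i}"]) auto
            moreover have "\<forall>k. fin_e (?ts k)" using t' by (simp add: fin_p_fin_e.intros)
            moreover have "\<forall>k. le_e (?ts k) (gs k)" using t' by (simp add: le_p_le_e.intros)
            ultimately have "le_e (MCase (MVApp x ?m) ?ts) b"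
              using ap 3 fm lm by (simp add: le_case_intro fin_case_intro)
            then obtain q3 g3 where "b = MCase (MVApp x q3) g3" "\<forall>k. le_e (?ts k) (g3 k)"
              using le_case_inv by blast
            then show "le_e t' (gs' i)" using b by (metis fun_upd_same mexp.inject(2))
          qed
        qed
        show ?thesis using 3 b hd br by blast
      qed
    qed
  qed
  moreover have "X2 V U" using assms by (simp add: X2_def)
  ultimately show ?thesis by blast
qed

theorem lemma3p4:
  assumes "nsp_e d" and "\<forall>i. nsp_e (es i)"
  shows "nsp_eval (MCase d es) = rsub d es"
proof -
  let ?V = "rsub d es"
  have nV: "nsp_e ?V" using nsp_rsub assms by blast
  have ub: "\<forall>t\<in>approxs (MCase d es). le_e t ?V"
  proof
    fix t assume "t \<in> approxs (MCase d es)"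
    then obtain T' where t: "fin_e t" "step_e\<^sup>*\<^sup>* (MCase d es) T'" "le_e t T'"
      by (auto simp: approxs_def)
    have "Inv es (MCase d es) ?V" using assms(1) by (rule Inv.I2)
    then have "Inv es T' ?V" using Inv_steps t(2) assms(2) by blast
    then show "le_e t ?V" using Inv_bound t by blast
  qed
  have least: "le_e ?V U'" if "nsp_e U'" "\<forall>t\<in>approxs (MCase d es). le_e t U'" for U'
  proof (rule approx_le[OF nV that(1)], intro allI impI)
    fix t assume t: "fin_e t \<and> le_e t ?V"
    then have "\<exists>T'. step_e\<^sup>*\<^sup>* (MCase d es) T' \<and> le_e t T'"
      using reach_aux[OF assms(2)] assms(1) by blast
    then have "t \<in> approxs (MCase d es)" using t by (auto simp: approxs_def)
    then show "le_e t U'" using that(2) by blast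
  qed
  show ?thesis unfolding nsp_eval_def
  proof (rule the_equality)
    show "nsp_e ?V \<and> (\<forall>t\<in>approxs (MCase d es). le_e t ?V) \<and>
      (\<forall>U'. nsp_e U' \<longrightarrow> (\<forall>t\<in>approxs (MCase d es). le_e t U') \<longrightarrow> le_e ?V U')"
      using nV ub least by blast
  next
    fix U assume U: "nsp_e U \<and> (\<forall>t\<in>approxs (MCase d es). le_e t U) \<and>
      (\<forall>U'. nsp_e U' \<longrightarrow> (\<forall>t\<in>approxs (MCase d es). le_e t U') \<longrightarrow> le_e U U')"
    then have "le_e U ?V" using nV ub by blast
    moreover have "le_e ?V U" using U least by blast
    ultimately show "U = ?V" by (rule le_e_antisym)
  qed
qed

end
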